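(* Let $\mathscr{H}$ be a complex Hilbert space and let $N(\cdot)$ be a norm on $\mathbb{B}(\mathscr{H})$ which is an algebra norm ($N(XY)\leq N(X)N(Y)$ for all $X,Y$) and self-adjoint ($N(X^* )=N(X)$ for all $X$). Then for every $T\in\mathbb{B}(\mathscr{H})$, $$\frac1{16}N(T^*T+TT^* )+\frac12\max\{N(\Re T),N(\Im T)\}\,|N(\Re T+\Im T)-N(\Re T-\Im T)|\leq w_N^2(T).$$
   Context: For $T\in\mathbb{B}(\mathscr{H})$: $\Re(T)=\frac12(T+T^* )$, $\Im(T)=\frac1{2i}(T-T^* )$, and $w_N(T)=\sup_{\theta\in\mathbb{R}}N(\Re(e^{i\theta}T))$. *)

theory Defs
  imports Complex_Main
begin

class complex_vector = real_vector +
  fixes scaleC :: "complex \<Rightarrow> 'a \<Rightarrow> 'a" (infixr "*\<^sub>C" 75)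
  assumes scaleC_add_right: "a *\<^sub>C (x + y) = a *\<^sub>C x + a *\<^sub>C y"
    and scaleC_add_left: "(a + b) *\<^sub>C x = a *\<^sub>C x + b *\<^sub>C x"
    and scaleC_scaleC: "a *\<^sub>C (b *\<^sub>C x) = (a * b) *\<^sub>C x"
    and scaleC_one: "1 *\<^sub>C x = x"
    and scaleR_scaleC: "scaleR r x = complex_of_real r *\<^sub>C x"

text \<open>Complex inner product (linear in the second argument, conjugate-linear in the first)
  inducing the norm.\<close>
class complex_inner = complex_vector + real_normed_vector +
  fixes cinner :: "'a \<Rightarrow> 'a \<Rightarrow> complex"
  assumes cinner_commute: "cinner x y = cnj (cinner y x)"
    and cinner_add_right: "cinner x (y + z) = cinner x y + cinner x z"
    and cinner_scaleC_right: "cinner x (a *\<^sub>C y) = a * cinner x y"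
    and cinner_ge_zero: "0 \<le> Re (cinner x x)"
    and cinner_eq_zero_iff: "cinner x x = 0 \<longleftrightarrow> x = 0"
    and norm_eq_sqrt_cinner: "norm x = sqrt (Re (cinner x x))"

class chilbert_space = complex_inner + complete_space

definition bounded_clinear :: "('a::complex_inner \<Rightarrow> 'a) \<Rightarrow> bool" where
  "bounded_clinear T \<longleftrightarrow>
     (\<forall>x y. T (x + y) = T x + T y) \<and> (\<forall>c x. T (c *\<^sub>C x) = c *\<^sub>C T x) \<and>
     (\<exists>K. \<forall>x. norm (T x) \<le> norm x * K)"

definition cadjoint :: "('a::complex_inner \<Rightarrow> 'a) \<Rightarrow> 'a \<Rightarrow> 'a" where
  "cadjoint T = (SOME S. \<forall>x y. cinner (T x) y = cinner x (S y))"

definition opRe :: "('a::complex_inner \<Rightarrow> 'a) \<Rightarrow> 'a \<Rightarrow> 'a" where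
  "opRe T = (\<lambda>x. (1/2) *\<^sub>C (T x + cadjoint T x))"

definition opIm :: "('a::complex_inner \<Rightarrow> 'a) \<Rightarrow> 'a \<Rightarrow> 'a" where
  "opIm T = (\<lambda>x. (1 / (2 * \<i>)) *\<^sub>C (T x - cadjoint T x))"

text \<open>\<open>N\<close> is a norm on \<open>\<bbbB>(H)\<close> (only its values on bounded operators matter).\<close>
definition is_norm_on_BH :: "(('a::complex_inner \<Rightarrow> 'a) \<Rightarrow> real) \<Rightarrow> bool" where
  "is_norm_on_BH N \<longleftrightarrow>
     (\<forall>X. bounded_clinear X \<longrightarrow> 0 \<le> N X) \<and>
     (\<forall>X. bounded_clinear X \<longrightarrow> (N X = 0 \<longleftrightarrow> X = (\<lambda>_. 0))) \<and>
     (\<forall>X c. bounded_clinear X \<longrightarrow> N (\<lambda>x. c *\<^sub>C X x) = cmod c * N X) \<and>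
     (\<forall>X Y. bounded_clinear X \<longrightarrow> bounded_clinear Y \<longrightarrow> N (\<lambda>x. X x + Y x) \<le> N X + N Y)"

definition algebra_norm :: "(('a::complex_inner \<Rightarrow> 'a) \<Rightarrow> real) \<Rightarrow> bool" where
  "algebra_norm N \<longleftrightarrow>
     (\<forall>X Y. bounded_clinear X \<longrightarrow> bounded_clinear Y \<longrightarrow> N (X \<circ> Y) \<le> N X * N Y)"

definition selfadjoint_norm :: "(('a::complex_inner \<Rightarrow> 'a) \<Rightarrow> real) \<Rightarrow> bool" where
  "selfadjoint_norm N \<longleftrightarrow> (\<forall>X. bounded_clinear X \<longrightarrow> N (cadjoint X) = N X)"

definition wN :: "(('a::complex_inner \<Rightarrow> 'a) \<Rightarrow> real) \<Rightarrow> ('a \<Rightarrow> 'a) \<Rightarrow> real" where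
  "wN N T = (SUP \<theta>::real. N (opRe (\<lambda>x. exp (\<i> * complex_of_real \<theta>) *\<^sub>C T x)))"

end

theory Submission
  imports Defs
begin


lemma scaleC_additive: "additive (\<lambda>x::'a::complex_vector. a *\<^sub>C x)"
  by (simp add: additive_def scaleC_add_right)

lemma scaleC_zero_right[simp]: "a *\<^sub>C (0::'a::complex_vector) = 0"
  using additive.zero[OF scaleC_additive] .
lemma scaleC_minus_right[simp]: "a *\<^sub>C (- x::'a::complex_vector) = - (a *\<^sub>C x)"
  using additive.minus[OF scaleC_additive] .
lemma scaleC_diff_right: "a *\<^sub>C (x - y::'a::complex_vector) = a *\<^sub>C x - a *\<^sub>C y"
  using additive.diff[OF scaleC_additive] .
lemma scaleC_zero_left[simp]: "0 *\<^sub>C (x::'a::complex_vector) = 0"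
  using scaleR_scaleC[of 0 x] by simp
lemma scaleC_minus_left: "(- a) *\<^sub>C (x::'a::complex_vector) = - (a *\<^sub>C x)"
  by (metis add_eq_0_iff2 scaleC_add_left scaleC_zero_left add.right_inverse)
lemma scaleC_diff_left: "(a - b) *\<^sub>C (x::'a::complex_vector) = a *\<^sub>C x - b *\<^sub>C x"
  by (metis diff_conv_add_uminus scaleC_add_left scaleC_minus_left)
lemma scaleC_of_real: "complex_of_real r *\<^sub>C (x::'a::complex_vector) = r *\<^sub>R x"
  by (simp add: scaleR_scaleC)

lemma cinner_additive: "additive (\<lambda>y. cinner (x::'a::complex_inner) y)"
  by (simp add: additive_def cinner_add_right)
lemma cinner_zero_right[simp]: "cinner (x::'a::complex_inner) 0 = 0"
  using additive.zero[OF cinner_additive] .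
lemma cinner_minus_right[simp]: "cinner (x::'a::complex_inner) (- y) = - cinner x y"
  using additive.minus[OF cinner_additive] .
lemma cinner_diff_right: "cinner (x::'a::complex_inner) (y - z) = cinner x y - cinner x z"
  using additive.diff[OF cinner_additive] .
lemma cinner_add_left: "cinner (x + y::'a::complex_inner) z = cinner x z + cinner y z"
  by (metis cinner_commute cinner_add_right complex_cnj_add)
lemma cinner_zero_left[simp]: "cinner 0 (x::'a::complex_inner) = 0"
  by (metis cinner_commute cinner_zero_right complex_cnj_zero)
lemma cinner_minus_left[simp]: "cinner (- x::'a::complex_inner) y = - cinner x y"
  by (metis cinner_commute cinner_minus_right complex_cnj_minus)
lemma cinner_diff_left: "cinner (x - y::'a::complex_inner) z = cinner x z - cinner y z"
  by (metis cinner_commute cinner_diff_right complex_cnj_diff)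
lemma cinner_scaleC_left: "cinner (a *\<^sub>C x::'a::complex_inner) y = cnj a * cinner x y"
  by (metis cinner_commute cinner_scaleC_right complex_cnj_mult)

lemma cinner_self_real: "cinner x (x::'a::complex_inner) = complex_of_real ((norm x)^2)"
proof -
  have "Im (cinner x x) = 0" using cinner_commute[of x x]
    by (metis cnj.sel(2) neg_equal_zero)
  moreover have "Re (cinner x x) = (norm x)^2"
    using norm_eq_sqrt_cinner[of x] cinner_ge_zero[of x] by simp
  ultimately show ?thesis by (simp add: complex_eq_iff)
qed

lemma norm_sq_Re: "(norm (x::'a::complex_inner))^2 = Re (cinner x x)"
  by (simp add: cinner_self_real)

lemma norm_scaleC: "norm (a *\<^sub>C x::'a::complex_inner) = cmod a * norm x"
proof -
  have e: "cinner (a *\<^sub>C x) (a *\<^sub>C x) = (cnj a * a) * cinner x x"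
    by (simp add: cinner_scaleC_left cinner_scaleC_right mult.assoc)
  have "(norm (a *\<^sub>C x))^2 = Re ((cnj a * a) * cinner x x)"
    by (simp only: norm_sq_Re e)
  also have "\<dots> = Re (complex_of_real ((cmod a)^2) * complex_of_real ((norm x)^2))"
    by (simp only: cinner_self_real complex_norm_square mult.commute)
  also have "\<dots> = (cmod a * norm x)^2"
    by (simp add: power_mult_distrib)
  finally show ?thesis
    by (rule power2_eq_imp_eq) simp_all
qed

lemma norm_add_sq: "(norm (x + y::'a::complex_inner))^2 = (norm x)^2 + (norm y)^2 + 2 * Re (cinner x y)"
proof -
  have "(norm (x + y))^2 = Re (cinner x x + cinner x y + (cinner y x + cinner y y))"
    by (simp add: norm_sq_Re cinner_add_left cinner_add_right)
  also have "\<dots> = (norm x)^2 + (norm y)^2 + 2 * Re (cinner x y)"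
    using cinner_commute[of y x] by (simp add: norm_sq_Re)
  finally show ?thesis .
qed

lemma norm_diff_sq: "(norm (x - y::'a::complex_inner))^2 = (norm x)^2 + (norm y)^2 - 2 * Re (cinner x y)"
  using norm_add_sq[of x "- y"] by simp

lemma cinner_ext: assumes "\<And>x. cinner x a = cinner x (b::'a::complex_inner)" shows "a = b"
proof -
  have "cinner (a - b) (a - b) = 0" using assms[of "a - b"] by (simp add: cinner_diff_right)
  thus ?thesis by (simp add: cinner_eq_zero_iff)
qed

lemma cauchy_schwarz: "cmod (cinner x y) \<le> norm x * norm (y::'a::complex_inner)"
proof (cases "x = 0")
  case True thus ?thesis by simp
next
  case False
  define n where "n = norm x"
  have n: "n > 0" using False n_def by simp
  define c where "c = cinner x y"
  define t where "t = c / complex_of_real (n^2)"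
  have "0 \<le> (norm (y - t *\<^sub>C x))^2" by simp
  also have "\<dots> = (norm y)^2 + (cmod t * n)^2 - 2 * Re (t * cinner y x)"
    by (simp add: norm_diff_sq norm_scaleC cinner_scaleC_right n_def)
  also have "\<dots> = (norm y)^2 - (cmod c)^2 / n^2"
  proof -
    have cy: "cinner y x = cnj c" using c_def cinner_commute by metis
    have ct: "cmod t = cmod c / n^2" using n by (simp add: t_def norm_divide norm_power)
    have t1: "cmod t * n = cmod c / n" using n unfolding ct by (simp add: power2_eq_square)
    have cc: "c * cnj c = complex_of_real ((cmod c)^2)" by (simp add: complex_norm_square[symmetric])
    have t2: "t * cnj c = complex_of_real ((cmod c)^2 / n^2)"
      unfolding t_def using cc by (simp add: of_real_divide)
    show ?thesis unfolding cy t2 Re_complex_of_real power_mult_distrib t1 power_divide by simp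
  qed
  finally have "(cmod c)^2 / n^2 \<le> (norm y)^2" by linarith
  hence "(cmod c)^2 \<le> (norm y)^2 * n^2" using n by (simp add: divide_le_eq)
  hence "(cmod c)^2 \<le> (n * norm y)^2" by (simp add: power_mult_distrib mult.commute)
  thus ?thesis unfolding c_def n_def
    by (meson mult_nonneg_nonneg norm_ge_zero power2_le_imp_le)
qed


lemma riesz:
  fixes f :: "'a::chilbert_space \<Rightarrow> complex"
  assumes add: "\<And>x y. f (x + y) = f x + f y"
    and hom: "\<And>c x. f (c *\<^sub>C x) = c * f x"
    and bnd: "\<And>x. cmod (f x) \<le> norm x * K"
  shows "\<exists>y. \<forall>x. f x = cinner y x"
proof (cases "\<forall>x. f x = 0")
  case True thus ?thesis by (intro exI[of _ 0]) simp
next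
  case False
  then obtain x0 where x0: "f x0 \<noteq> 0" by blast
  have f0: "f 0 = 0" using hom[of 0 0] by simp
  define M where "M = {x. f x = 1}"
  have e0: "(1 / f x0) *\<^sub>C x0 \<in> M" using x0 by (simp add: M_def hom)
  define D where "D = Inf ((\<lambda>x. (norm x)^2) ` M)"
  have bdd: "bdd_below ((\<lambda>x. (norm x)^2) ` M)"
    by (rule bdd_belowI[of _ 0]) auto
  have lower: "D \<le> (norm x)^2" if "x \<in> M" for x
    unfolding D_def using that bdd by (intro cInf_lower) auto
  have "\<exists>x\<in>M. (norm x)^2 < D + inverse (real (Suc n))" for n
  proof -
    have "\<exists>z\<in>(\<lambda>x. (norm x)^2) ` M. z < D + inverse (real (Suc n))"
      unfolding D_def by (rule cInf_lessD) (use e0 in auto)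
    thus ?thesis by auto
  qed
  then obtain xs where xs: "\<And>n. xs n \<in> M" "\<And>n. (norm (xs n))^2 < D + inverse (real (Suc n))"
    by metis
  have lin: "bounded_linear f"
  proof (rule bounded_linear_intro[of _ K])
    show "f (x + y) = f x + f y" for x y by (rule add)
    show "f (r *\<^sub>R x) = r *\<^sub>R f x" for r x
      by (simp add: scaleR_scaleC hom scaleR_conv_of_real)
    show "norm (f x) \<le> norm x * K" for x by (rule bnd)
  qed
  have fM: "f x = 1" if "x \<in> M" for x using that by (simp add: M_def)
  have par: "(norm (xs m - xs n))^2 \<le> 2 * inverse (real (Suc m)) + 2 * inverse (real (Suc n))" for m n
  proof -
    define h where "h = (1/2) *\<^sub>R (xs m + xs n)"
    have "f h = 1" unfolding h_def using fM[OF xs(1)[of m]] fM[OF xs(1)[of n]]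
      by (simp add: scaleR_scaleC hom add)
    hence "D \<le> (norm h)^2" using lower by (simp add: M_def)
    moreover have "(norm h)^2 = (1/4) * (norm (xs m + xs n))^2"
      unfolding h_def by (simp add: power2_eq_square)
    moreover have "(norm (xs m + xs n))^2 + (norm (xs m - xs n))^2
        = 2 * (norm (xs m))^2 + 2 * (norm (xs n))^2"
      by (simp add: norm_add_sq norm_diff_sq)
    ultimately show ?thesis using xs(2)[of m] xs(2)[of n] by linarith
  qed
  have "Cauchy xs"
  proof (rule metric_CauchyI)
    fix e :: real assume e: "0 < e"
    then obtain N where N: "inverse (real (Suc N)) < e^2 / 4"
      using reals_Archimedean[of "e^2/4"] by auto
    have "dist (xs m) (xs n) < e" if "m \<ge> N" "n \<ge> N" for m n
    proof -
      have "inverse (real (Suc m)) \<le> inverse (real (Suc N))"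
        using that by (simp add: le_imp_inverse_le)
      moreover have "inverse (real (Suc n)) \<le> inverse (real (Suc N))"
        using that by (simp add: le_imp_inverse_le)
      ultimately have "(norm (xs m - xs n))^2 < e^2"
        using par[of m n] N by linarith
      hence "norm (xs m - xs n) < e" using e by (simp add: power_less_imp_less_base)
      thus ?thesis by (simp add: dist_norm)
    qed
    thus "\<exists>N. \<forall>m\<ge>N. \<forall>n\<ge>N. dist (xs m) (xs n) < e" by blast
  qed
  then obtain u where u: "xs \<longlonglongrightarrow> u"
    using Cauchy_convergent_iff convergent_def by blast
  have "(\<lambda>n. f (xs n)) \<longlonglongrightarrow> f u" using bounded_linear.tendsto[OF lin u] .
  moreover have "(\<lambda>n. f (xs n)) = (\<lambda>n. 1)" using fM xs(1) by auto
  ultimately have fu: "f u = 1" using LIMSEQ_unique tendsto_const by metis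
  have "(norm u)^2 \<le> D"
  proof (rule LIMSEQ_le)
    show "(\<lambda>n. (norm (xs n))^2) \<longlonglongrightarrow> (norm u)^2"
      by (intro tendsto_intros u)
    show "(\<lambda>n. D + inverse (real (Suc n))) \<longlonglongrightarrow> D"
      using tendsto_add[OF tendsto_const LIMSEQ_inverse_real_of_nat, of D] by simp
    show "\<exists>N. \<forall>n\<ge>N. (norm (xs n))^2 \<le> D + inverse (real (Suc n))"
      using xs(2) less_imp_le by blast
  qed
  hence umin: "(norm u)^2 \<le> (norm x)^2" if "x \<in> M" for x using lower[OF that] by linarith
  have orth: "cinner u w = 0" if fw: "f w = 0" for w
  proof -
    define c where "c = cinner u w"
    define a where "a = (cmod c)^2"
    define q where "q = (norm w)^2"
    define s where "s = 1 / (q + 1)"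
    have q0: "q \<ge> 0" by (simp add: q_def)
    have s0: "s > 0" using q0 by (simp add: s_def)
    have sq: "s * q < 1" using q0 by (simp add: s_def)
    define t where "t = - complex_of_real s * cnj c"
    have "u + t *\<^sub>C w \<in> M" using fu fw by (simp add: M_def add hom)
    hence "(norm u)^2 \<le> (norm (u + t *\<^sub>C w))^2" by (rule umin)
    also have "\<dots> = (norm u)^2 + (cmod t * norm w)^2 + 2 * Re (t * c)"
      by (simp add: norm_add_sq norm_scaleC cinner_scaleC_right c_def)
    also have "cmod t = s * cmod c" using s0 by (simp add: t_def norm_mult)
    also have "t * c = - complex_of_real (s * a)"
    proof -
      have "cnj c * c = complex_of_real a" unfolding a_def
        by (simp add: complex_norm_square[symmetric] mult.commute)
      thus ?thesis by (simp add: t_def mult.assoc)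
    qed
    finally have "0 \<le> s^2 * a * q - 2 * s * a"
      by (simp add: a_def q_def power_mult_distrib algebra_simps)
    hence "0 \<le> s * (a * (s * q - 2))" by (simp add: algebra_simps power2_eq_square)
    hence h1: "0 \<le> a * (s * q - 2)" using s0 by (simp add: zero_le_mult_iff)
    have "a \<le> 0"
    proof (rule ccontr)
      assume "\<not> a \<le> 0"
      hence "a * (s * q - 2) < 0" using sq by (intro mult_pos_neg) auto
      with h1 show False by linarith
    qed
    thus ?thesis unfolding a_def c_def by simp
  qed
  have u0: "u \<noteq> 0" using fu f0 by auto
  define y where "y = complex_of_real (1 / (norm u)^2) *\<^sub>C u"
  have "f x = cinner y x" for x
  proof -
    have "f (x - f x *\<^sub>C u) = 0"
    proof -
      have fd: "f (a - b) = f a - f b" for a b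
        using add[of "a - b" b] by simp
      show ?thesis using fu by (simp add: fd hom)
    qed
    hence "cinner u (x - f x *\<^sub>C u) = 0" by (rule orth)
    hence "cinner u x = f x * complex_of_real ((norm u)^2)"
      by (simp add: cinner_diff_right cinner_scaleC_right cinner_self_real)
    thus ?thesis using u0 by (simp add: y_def cinner_scaleC_left)
  qed
  thus ?thesis by blast
qed



lemma bcl_D:
  assumes "bounded_clinear T"
  shows "T (x + y) = T x + T y" "T (c *\<^sub>C x) = c *\<^sub>C T x" "\<exists>K\<ge>0. \<forall>x. norm (T x) \<le> norm x * K"
proof -
  show "T (x + y) = T x + T y" "T (c *\<^sub>C x) = c *\<^sub>C T x" using assms by (auto simp: bounded_clinear_def)
  obtain K where K: "\<forall>x. norm (T x) \<le> norm x * K" using assms by (auto simp: bounded_clinear_def)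
  have "norm (T x) \<le> norm x * max K 0" for x
    using K[rule_format, of x] by (metis max.cobounded1 mult_left_mono norm_ge_zero order_trans)
  thus "\<exists>K\<ge>0. \<forall>x. norm (T x) \<le> norm x * K" by (intro exI[of _ "max K 0"]) auto
qed

lemma bcl_diff_pt: assumes "bounded_clinear T" shows "T (x - y) = T x - T y"
  using bcl_D(1)[OF assms, of "x - y" y] by simp

lemma bcl_add: assumes "bounded_clinear X" "bounded_clinear Y"
  shows "bounded_clinear (\<lambda>x. X x + Y x)"
proof -
  obtain K1 where K1: "K1 \<ge> 0" "\<forall>x. norm (X x) \<le> norm x * K1" using bcl_D(3)[OF assms(1)] by blast
  obtain K2 where K2: "K2 \<ge> 0" "\<forall>x. norm (Y x) \<le> norm x * K2" using bcl_D(3)[OF assms(2)] by blast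
  have "norm (X x + Y x) \<le> norm x * (K1 + K2)" for x
    using norm_triangle_ineq[of "X x" "Y x"] K1(2)[rule_format, of x] K2(2)[rule_format, of x]
    by (simp add: distrib_left)
  moreover have "\<forall>x y. X (x + y) + Y (x + y) = (X x + Y x) + (X y + Y y)"
    using bcl_D(1)[OF assms(1)] bcl_D(1)[OF assms(2)] by (simp add: algebra_simps)
  moreover have "\<forall>d x. X (d *\<^sub>C x) + Y (d *\<^sub>C x) = d *\<^sub>C (X x + Y x)"
    using bcl_D(2)[OF assms(1)] bcl_D(2)[OF assms(2)] by (simp add: scaleC_add_right)
  ultimately show ?thesis unfolding bounded_clinear_def by blast
qed

lemma bcl_scale: assumes "bounded_clinear X"
  shows "bounded_clinear (\<lambda>x. c *\<^sub>C X x)"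
proof -
  obtain K1 where K1: "K1 \<ge> 0" "\<forall>x. norm (X x) \<le> norm x * K1" using bcl_D(3)[OF assms(1)] by blast
  have "norm (c *\<^sub>C X x) \<le> norm x * (cmod c * K1)" for x
    using mult_left_mono[OF K1(2)[rule_format, of x] norm_ge_zero[of c]] by (simp add: norm_scaleC mult_ac)
  moreover have "\<forall>x y. c *\<^sub>C X (x + y) = c *\<^sub>C X x + c *\<^sub>C X y"
    using bcl_D(1)[OF assms(1)] by (simp add: scaleC_add_right)
  moreover have "\<forall>d x. c *\<^sub>C X (d *\<^sub>C x) = d *\<^sub>C (c *\<^sub>C X x)"
    using bcl_D(2)[OF assms(1)] by (simp add: scaleC_scaleC mult.commute)
  ultimately show ?thesis unfolding bounded_clinear_def by blast
qed

lemma bcl_diff: assumes "bounded_clinear X" "bounded_clinear Y"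
  shows "bounded_clinear (\<lambda>x. X x - Y x)"
proof -
  have "(\<lambda>x. X x - Y x) = (\<lambda>x. X x + (-1) *\<^sub>C Y x)"
    by (simp add: scaleC_minus_left scaleC_one)
  thus ?thesis using bcl_add[OF assms(1) bcl_scale[OF assms(2)]] by simp
qed

lemma bcl_comp: assumes "bounded_clinear X" "bounded_clinear Y"
  shows "bounded_clinear (\<lambda>x. X (Y x))"
proof -
  obtain K1 where K1: "K1 \<ge> 0" "\<forall>x. norm (X x) \<le> norm x * K1" using bcl_D(3)[OF assms(1)] by blast
  obtain K2 where K2: "K2 \<ge> 0" "\<forall>x. norm (Y x) \<le> norm x * K2" using bcl_D(3)[OF assms(2)] by blast
  have "norm (X (Y x)) \<le> norm x * (K2 * K1)" for x
  proof -
    have "norm (X (Y x)) \<le> norm (Y x) * K1" using K1(2) by blast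
    also have "\<dots> \<le> (norm x * K2) * K1" using K2(2) K1(1) by (simp add: mult_right_mono)
    finally show ?thesis by (simp add: mult.assoc)
  qed
  moreover have "\<forall>x y. X (Y (x + y)) = X (Y x) + X (Y y)"
    using bcl_D(1)[OF assms(1)] bcl_D(1)[OF assms(2)] by simp
  moreover have "\<forall>d x. X (Y (d *\<^sub>C x)) = d *\<^sub>C X (Y x)"
    using bcl_D(2)[OF assms(1)] bcl_D(2)[OF assms(2)] by simp
  ultimately show ?thesis unfolding bounded_clinear_def by blast
qed

lemma adjoint_exists:
  fixes T :: "'a::chilbert_space \<Rightarrow> 'a"
  assumes "bounded_clinear T"
  shows "\<forall>x y. cinner (T x) y = cinner x (cadjoint T y)"
proof -
  obtain K where K: "K \<ge> 0" "\<forall>x. norm (T x) \<le> norm x * K" using bcl_D(3)[OF assms] by blast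
  have "\<exists>z. \<forall>x. cinner (T x) y = cinner x z" for y
  proof -
    have "\<exists>z. \<forall>x. cinner y (T x) = cinner z x"
    proof (rule riesz[of _ "norm y * K"])
      show "cinner y (T (a + b)) = cinner y (T a) + cinner y (T b)" for a b
        by (simp add: bcl_D(1)[OF assms] cinner_add_right)
      show "cinner y (T (c *\<^sub>C a)) = c * cinner y (T a)" for c a
        by (simp add: bcl_D(2)[OF assms] cinner_scaleC_right)
      show "cmod (cinner y (T a)) \<le> norm a * (norm y * K)" for a
      proof -
        have "cmod (cinner y (T a)) \<le> norm y * norm (T a)" by (rule cauchy_schwarz)
        also have "\<dots> \<le> norm y * (norm a * K)" using K(2) by (simp add: mult_left_mono)
        finally show ?thesis by (simp add: mult_ac)
      qed
    qed
    then obtain z where "\<forall>x. cinner y (T x) = cinner z x" by blast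
    hence "\<forall>x. cinner (T x) y = cinner x z" by (metis cinner_commute)
    thus ?thesis by blast
  qed
  hence "\<exists>S. \<forall>y x. cinner (T x) y = cinner x (S y)" by metis
  hence "\<exists>S. \<forall>x y. cinner (T x) y = cinner x (S y)" by blast
  thus ?thesis unfolding cadjoint_def by (rule someI_ex)
qed

lemma adjoint_unique:
  fixes T :: "'a::complex_inner \<Rightarrow> 'a"
  assumes "\<forall>x y. cinner (T x) y = cinner x (S y)"
  shows "cadjoint T = S"
proof -
  have "\<forall>x y. cinner (T x) y = cinner x (cadjoint T y)"
    unfolding cadjoint_def by (rule someI[of _ S]) (rule assms)
  with assms show ?thesis by (intro ext cinner_ext) metis
qed

lemma adjoint_bcl:
  fixes T :: "'a::chilbert_space \<Rightarrow> 'a"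
  assumes T: "bounded_clinear T"
  shows "bounded_clinear (cadjoint T)"
proof -
  define S where "S = cadjoint T"
  have adj: "\<And>x y. cinner (T x) y = cinner x (S y)" using adjoint_exists[OF T] S_def by blast
  obtain K where K: "K \<ge> 0" "\<forall>x. norm (T x) \<le> norm x * K" using bcl_D(3)[OF T] by blast
  have a: "S (a + b) = S a + S b" for a b
    by (rule cinner_ext) (simp add: adj[symmetric] cinner_add_right)
  have h: "S (c *\<^sub>C a) = c *\<^sub>C S a" for c a
    by (rule cinner_ext) (simp add: adj[symmetric] cinner_scaleC_right)
  have "norm (S y) \<le> norm y * K" for y
  proof -
    have "(norm (S y))^2 = Re (cinner (T (S y)) y)" by (simp add: adj norm_sq_Re)
    also have "\<dots> \<le> cmod (cinner (T (S y)) y)" by (rule complex_Re_le_cmod)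
    also have "\<dots> \<le> norm (T (S y)) * norm y" by (rule cauchy_schwarz)
    also have "\<dots> \<le> norm (S y) * K * norm y" using K(2) by (simp add: mult_right_mono)
    finally have *: "norm (S y) * norm (S y) \<le> norm (S y) * (K * norm y)"
      by (simp add: power2_eq_square mult_ac)
    show ?thesis
    proof (cases "norm (S y) = 0")
      case True thus ?thesis using K(1) by simp
    next
      case False hence "norm (S y) > 0" by simp
      with * have "norm (S y) \<le> K * norm y" by (simp add: mult_le_cancel_left_pos)
      thus ?thesis by (simp add: mult.commute)
    qed
  qed
  thus ?thesis unfolding S_def[symmetric] bounded_clinear_def using a h by blast
qed



lemma scaleC_decomp: "c *\<^sub>C (p::'a::complex_vector) = Re c *\<^sub>R p + Im c *\<^sub>R (\<i> *\<^sub>C p)"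
proof -
  have "c = complex_of_real (Re c) + complex_of_real (Im c) * \<i>" by (simp add: complex_eq_iff)
  hence "c *\<^sub>C p = (complex_of_real (Re c) + complex_of_real (Im c) * \<i>) *\<^sub>C p" by simp
  also have "\<dots> = Re c *\<^sub>R p + Im c *\<^sub>R (\<i> *\<^sub>C p)"
    by (simp only: scaleC_add_left scaleC_scaleC[symmetric] scaleR_scaleC)
  finally show ?thesis .
qed

lemma half_C: "(1/2::complex) *\<^sub>C (p::'a::complex_vector) = (1/2::real) *\<^sub>R p"
  by (simp add: scaleR_scaleC)

lemma halfi_C: "(1/(2*\<i>)) *\<^sub>C (p::'a::complex_vector) = (-1/2::real) *\<^sub>R (\<i> *\<^sub>C p)"
proof -
  have "(1/(2*\<i>)) = complex_of_real (-1/2) * \<i>" by (simp add: complex_eq_iff)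
  thus ?thesis by (simp add: scaleR_scaleC scaleC_scaleC)
qed

lemma key_lin:
  "(1/2) *\<^sub>C (c *\<^sub>C p + cnj c *\<^sub>C q) =
     Re c *\<^sub>R ((1/2) *\<^sub>C (p + q)) + (- Im c) *\<^sub>R ((1/(2*\<i>)) *\<^sub>C (p - (q::'a::complex_vector)))"
  unfolding scaleC_decomp[of c p] scaleC_decomp[of "cnj c" q] half_C halfi_C scaleC_diff_right
  by (simp add: algebra_simps)

lemma bcl_scaleR: "bounded_clinear X \<Longrightarrow> bounded_clinear (\<lambda>x. r *\<^sub>R X x)"
  using bcl_scale[of X "complex_of_real r"] by (simp add: scaleR_scaleC)

lemma N_scaleR:
  assumes "is_norm_on_BH N" "bounded_clinear X"
  shows "N (\<lambda>x. r *\<^sub>R X x) = \<bar>r\<bar> * N X"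
  using assms unfolding is_norm_on_BH_def by (simp add: scaleR_scaleC)

lemma key_sq:
  fixes T S :: "'a::complex_inner \<Rightarrow> 'a"
  assumes T: "bounded_clinear T" and S: "bounded_clinear S"
  defines "A \<equiv> \<lambda>x. (1/2) *\<^sub>C (T x + S x)" and "B \<equiv> \<lambda>x. (1/(2*\<i>)) *\<^sub>C (T x - S x)"
  shows "S (T x) + T (S x) = 2 *\<^sub>C (A (A x) + B (B x))"
proof -
  have TR: "T (r *\<^sub>R v) = r *\<^sub>R T v" for r v by (simp add: scaleR_scaleC bcl_D(2)[OF T])
  have SR: "S (r *\<^sub>R v) = r *\<^sub>R S v" for r v by (simp add: scaleR_scaleC bcl_D(2)[OF S])
  define p where "p = T (T x)"
  define q where "q = T (S x)"
  define r where "r = S (T x)"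
  define s where "s = S (S x)"
  have AA: "A (A x) = (1/4::real) *\<^sub>R (p + q + r + s)"
    unfolding A_def half_C p_def q_def r_def s_def
    by (simp add: TR SR bcl_D(1)[OF T] bcl_D(1)[OF S] scaleR_add_right[symmetric] add.assoc)
  have BB: "B (B x) = (-1/4::real) *\<^sub>R ((p - q) - (r - s))"
  proof -
    have "B (B x) = (1/(2*\<i>)) *\<^sub>C ((1/(2*\<i>)) *\<^sub>C (p - q) - (1/(2*\<i>)) *\<^sub>C (r - s))"
      unfolding B_def p_def q_def r_def s_def
      by (simp add: bcl_D(2)[OF T] bcl_D(2)[OF S] bcl_diff_pt[OF T] bcl_diff_pt[OF S])
    also have "\<dots> = ((1/(2*\<i>)) * (1/(2*\<i>))) *\<^sub>C ((p - q) - (r - s))"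
      by (simp only: scaleC_diff_right[symmetric] scaleC_scaleC)
    also have "(1/(2*\<i>)) * (1/(2*\<i>)) = complex_of_real (-1/4)"
      by (simp add: complex_eq_iff)
    finally show ?thesis by (simp add: scaleR_scaleC)
  qed
  have "A (A x) + B (B x) = (1/4::real) *\<^sub>R ((q + r) + (q + r))"
  proof -
    have "A (A x) + B (B x) = (1/4::real) *\<^sub>R ((p + q + r + s) - ((p - q) - (r - s)))"
    proof -
      have m: "(-1/4::real) = - (1/4)" by simp
      show ?thesis unfolding AA BB m scaleR_minus_left
          scaleR_diff_right[of "1/4::real" "p + q + r + s" "(p - q) - (r - s)"]
        by (simp only: diff_conv_add_uminus)
    qed
    also have "(p + q + r + s) - ((p - q) - (r - s)) = (q + r) + (q + r)"
      by (simp add: algebra_simps)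
    finally show ?thesis .
  qed
  also have "\<dots> = (1/2::real) *\<^sub>R (q + r)"
    unfolding scaleR_add_right[of "1/4::real" "q + r" "q + r"] scaleR_left_distrib[symmetric] by simp
  finally have "2 *\<^sub>C (A (A x) + B (B x)) = 2 *\<^sub>C ((1/2::real) *\<^sub>R (q + r))" by simp
  also have "\<dots> = q + r" by (simp add: scaleR_scaleC scaleC_scaleC scaleC_one)
  finally show ?thesis by (simp add: q_def r_def add.commute)
qed



lemma final_arith:
  fixes e a b h x y w :: real
  shows "e \<le> 2 * (a + b) \<Longrightarrow> h = x \<Longrightarrow> x \<le> y \<Longrightarrow> y \<le> 3/4 * w
    \<Longrightarrow> a \<le> w \<Longrightarrow> b \<le> w \<Longrightarrow> (1/16) * e + h \<le> w"
proof -
  assume h: "e \<le> 2 * (a + b)" "h = x" "x \<le> y" "y \<le> 3/4 * w" "a \<le> w" "b \<le> w"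
  have "e \<le> 2 * a + 2 * b" using h(1) by (simp add: distrib_left)
  hence "e \<le> 4 * w" using h by linarith
  hence "(1/16) * e \<le> (1/16) * (4 * w)" by (rule mult_left_mono) simp
  moreover have "h \<le> 3/4 * w" using h by linarith
  ultimately have "(1/16) * e + h \<le> (1/16) * (4 * w) + 3/4 * w" by (rule add_mono)
  also have "(1/16) * (4 * w) + 3/4 * w = w" by simp
  finally show ?thesis .
qed

theorem corollary2p16:
  fixes N :: "('a::chilbert_space \<Rightarrow> 'a) \<Rightarrow> real" and T :: "'a \<Rightarrow> 'a"
  assumes "is_norm_on_BH N" and "algebra_norm N" and "selfadjoint_norm N"
    and "bounded_clinear T"
  shows "(1/16) * N (\<lambda>x. cadjoint T (T x) + T (cadjoint T x))
           + (1/2) * max (N (opRe T)) (N (opIm T))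
               * \<bar>N (\<lambda>x. opRe T x + opIm T x) - N (\<lambda>x. opRe T x - opIm T x)\<bar>
         \<le> (wN N T)^2"
proof -
  note nN = assms(1)[unfolded is_norm_on_BH_def]
  have Nnn: "\<And>X. bounded_clinear X \<Longrightarrow> 0 \<le> N X" using nN by blast
  have Ntri: "\<And>X Y. bounded_clinear X \<Longrightarrow> bounded_clinear Y \<Longrightarrow> N (\<lambda>x. X x + Y x) \<le> N X + N Y"
    using nN by blast
  have Nsc: "\<And>X c. bounded_clinear X \<Longrightarrow> N (\<lambda>x. c *\<^sub>C X x) = cmod c * N X" using nN by blast
  have Nalg: "\<And>X Y. bounded_clinear X \<Longrightarrow> bounded_clinear Y \<Longrightarrow> N (\<lambda>x. X (Y x)) \<le> N X * N Y"
    using assms(2) unfolding algebra_norm_def o_def by blast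
  define S where "S = cadjoint T"
  have T: "bounded_clinear T" by fact
  have S: "bounded_clinear S" unfolding S_def by (rule adjoint_bcl[OF T])
  have adj: "\<And>x y. cinner (T x) y = cinner x (S y)" using adjoint_exists[OF T] S_def by blast
  define A where "A = opRe T"
  define B where "B = opIm T"
  have Aeq: "A = (\<lambda>x. (1/2) *\<^sub>C (T x + S x))" unfolding A_def opRe_def S_def ..
  have Beq: "B = (\<lambda>x. (1/(2*\<i>)) *\<^sub>C (T x - S x))" unfolding B_def opIm_def S_def ..
  have A: "bounded_clinear A" unfolding Aeq by (intro bcl_scale bcl_add T S)
  have B: "bounded_clinear B" unfolding Beq by (intro bcl_scale bcl_diff T S)
  define a where "a = N A"
  define b where "b = N B"
  define p where "p = N (\<lambda>x. A x + B x)"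
  define q where "q = N (\<lambda>x. A x - B x)"
  have a0: "a \<ge> 0" unfolding a_def by (rule Nnn[OF A])
  have b0: "b \<ge> 0" unfolding b_def by (rule Nnn[OF B])
  have p0: "p \<ge> 0" unfolding p_def by (rule Nnn[OF bcl_add[OF A B]])
  have q0: "q \<ge> 0" unfolding q_def by (rule Nnn[OF bcl_diff[OF A B]])
  have rot: "opRe (\<lambda>x. c *\<^sub>C T x) = (\<lambda>x. Re c *\<^sub>R A x + (- Im c) *\<^sub>R B x)" for c
  proof -
    have "cadjoint (\<lambda>x. c *\<^sub>C T x) = (\<lambda>y. cnj c *\<^sub>C S y)"
      by (rule adjoint_unique) (simp add: cinner_scaleC_left cinner_scaleC_right adj)
    thus ?thesis unfolding opRe_def Aeq Beq by (simp add: key_lin)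
  qed
  define W where "W = (\<lambda>\<theta>::real. N (opRe (\<lambda>x. exp (\<i> * complex_of_real \<theta>) *\<^sub>C T x)))"
  have Wf: "W \<theta> = N (\<lambda>x. cos \<theta> *\<^sub>R A x + (- sin \<theta>) *\<^sub>R B x)" for \<theta>
  proof -
    have "exp (\<i> * complex_of_real \<theta>) = cis \<theta>" by (simp add: cis_conv_exp)
    thus ?thesis unfolding W_def rot by simp
  qed
  have Wle: "W \<theta> \<le> a + b" for \<theta>
  proof -
    have "W \<theta> \<le> N (\<lambda>x. cos \<theta> *\<^sub>R A x) + N (\<lambda>x. (- sin \<theta>) *\<^sub>R B x)"
      unfolding Wf by (intro Ntri bcl_scaleR A B)
    also have "\<dots> = \<bar>cos \<theta>\<bar> * a + \<bar>sin \<theta>\<bar> * b"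
      using N_scaleR[OF assms(1) A, of "cos \<theta>"] N_scaleR[OF assms(1) B, of "- sin \<theta>"]
      by (simp only: a_def b_def abs_minus_cancel)
    also have "\<dots> \<le> 1 * a + 1 * b"
      by (intro add_mono mult_right_mono a0 b0 abs_cos_le_one abs_sin_le_one)
    finally show ?thesis by simp
  qed
  have bdd: "bdd_above (range W)" by (rule bdd_aboveI[of _ "a + b"]) (auto intro: Wle)
  have wW: "W \<theta> \<le> wN N T" for \<theta>
    unfolding wN_def W_def[symmetric] by (rule cSUP_upper[OF UNIV_I bdd])
  define r where "r = sqrt 2 / 2"
  have r0: "r > 0" by (simp add: r_def)
  have rr: "r * r = 1/2" by (simp add: r_def)
  have r34: "r \<le> 3/4"
  proof -
    have "sqrt 2 \<le> sqrt (9/4)" by simp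
    also have "sqrt (9/4) = 3/2" by (simp add: real_sqrt_divide)
    finally show ?thesis by (simp add: r_def)
  qed
  have wa: "a \<le> wN N T"
  proof -
    have "W 0 = a" unfolding Wf a_def by simp
    thus ?thesis using wW[of 0] by simp
  qed
  have wb: "b \<le> wN N T"
  proof -
    have "W (- (pi/2)) = b" unfolding Wf b_def by simp
    thus ?thesis using wW[of "- (pi/2)"] by simp
  qed
  have wp: "r * p \<le> wN N T"
  proof -
    have "W (- (pi/4)) = N (\<lambda>x. r *\<^sub>R (A x + B x))"
      unfolding Wf by (simp add: cos_45 sin_45 r_def scaleR_add_right)
    also have "\<dots> = r * p" using N_scaleR[OF assms(1) bcl_add[OF A B], of r] r0
      by (simp add: p_def)
    finally show ?thesis using wW[of "- (pi/4)"] by simp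
  qed
  have wq: "r * q \<le> wN N T"
  proof -
    have "W (pi/4) = N (\<lambda>x. r *\<^sub>R (A x - B x))"
      unfolding Wf by (simp add: cos_45 sin_45 r_def scaleR_diff_right)
    also have "\<dots> = r * q" using N_scaleR[OF assms(1) bcl_diff[OF A B], of r] r0
      by (simp add: q_def)
    finally show ?thesis using wW[of "pi/4"] by simp
  qed
  define w where "w = wN N T"
  have E: "N (\<lambda>x. S (T x) + T (S x)) \<le> 2 * (a * a + b * b)"
  proof -
    have "(\<lambda>x. S (T x) + T (S x)) = (\<lambda>x. 2 *\<^sub>C (A (A x) + B (B x)))"
      unfolding Aeq Beq by (rule ext, rule key_sq[OF T S])
    hence "N (\<lambda>x. S (T x) + T (S x)) = 2 * N (\<lambda>x. A (A x) + B (B x))"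
      using Nsc[OF bcl_add[OF bcl_comp[OF A A] bcl_comp[OF B B]], of 2] by simp
    also have "\<dots> \<le> 2 * (N (\<lambda>x. A (A x)) + N (\<lambda>x. B (B x)))"
      using Ntri[OF bcl_comp[OF A A] bcl_comp[OF B B]] by simp
    also have "\<dots> \<le> 2 * (a * a + b * b)"
      using Nalg[OF A A] Nalg[OF B B] unfolding a_def b_def by simp
    finally show ?thesis .
  qed
  have m_le: "max a b \<le> w" using wa wb w_def by simp
  have d_le: "\<bar>p - q\<bar> * r \<le> w"
  proof -
    have "\<bar>p - q\<bar> \<le> max p q" using p0 q0 by simp
    hence "\<bar>p - q\<bar> * r \<le> max p q * r" using r0 by (simp add: mult_right_mono)
    also have "\<dots> \<le> w" using wp wq unfolding w_def max_def by (simp add: mult.commute)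
    finally show ?thesis .
  qed
  have h1: "max a b * (\<bar>p - q\<bar> * r) \<le> w * w"
    by (rule mult_mono[OF m_le d_le]) (use a0 b0 m_le r0 in auto)
  have h2: "(1/2) * max a b * \<bar>p - q\<bar> = r * (max a b * (\<bar>p - q\<bar> * r))"
    using rr by (simp add: algebra_simps)
  have h3: "r * (max a b * (\<bar>p - q\<bar> * r)) \<le> r * (w * w)"
    using h1 r0 by (simp add: mult_left_mono)
  have h4: "r * (w * w) \<le> 3/4 * (w * w)" by (rule mult_right_mono[OF r34]) simp
  have h5: "a * a \<le> w * w" using wa a0 w_def by (simp add: mult_mono)
  have h6: "b * b \<le> w * w" using wb b0 w_def by (simp add: mult_mono)
  have main: "(1/16) * N (\<lambda>x. S (T x) + T (S x)) + (1/2) * max a b * \<bar>p - q\<bar> \<le> w^2"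
    unfolding power2_eq_square by (rule final_arith[OF E h2 h3 h4 h5 h6])
  show ?thesis using main
    unfolding S_def[symmetric] A_def[symmetric] B_def[symmetric] a_def p_def q_def b_def w_def .
qed

end
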